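(* Let $\mathcal{S} \subseteq 2^{\mathcal{T}_Y}$ be an algebraic closure system which is closed under time shifts. Then there is a theory $\Sigma$ such that $\mathcal{S} = \mathrm{Mod}(\Sigma)$.
   Context: $Y$ is a non-empty finite set of attributes and $\mathcal{T}_Y = \{y^i \mid y \in Y, i \in \mathbb{Z}\}$. For $M \subseteq \mathcal{T}_Y$ and $j \in \mathbb{Z}$, $M + j = \{y^{i+j} \mid y^i \in M\}$. A closure system on $\mathcal{T}_Y$ is a family closed under arbitrary intersections; it induces the closure operator $\mathrm{C}_\mathcal{S}(M) = \bigcap\{N \in \mathcal{S} \mid M \subseteq N\}$. It is algebraic if $\mathrm{C}_\mathcal{S}(M) = \bigcup\{\mathrm{C}_\mathcal{S}(B) \mid B \subseteq M, B \text{ finite}\}$ for all $M$. $\mathcal{S}$ is closed under time shifts if $M+i \in \mathcal{S}$ for all $M \in \mathcal{S}$, $i \in \mathbb{Z}$. A formula is $A \Rightarrow B$ with $A,B$ finite subsets of $\mathcal{T}_Y$; $M \models A \Rightarrow B$ means that for every $i \in \mathbb{Z}$, $A+i \subseteq M$ implies $B+i \subseteq M$. A theory is a set of formulas and $\mathrm{Mod}(\Sigma)$ is the set of all $M \subseteq \mathcal{T}_Y$ in which all formulas of $\Sigma$ are true. *)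

theory Defs
  imports Main
begin

(* Attributes: a finite (automatically nonempty) type 'y.
   Time-stamped attributes y^i are pairs (y, i) :: 'y \<times> int, so T_Y = UNIV. *)
type_synonym 'y tattr = "'y \<times> int"

definition shift :: "'y tattr set \<Rightarrow> int \<Rightarrow> 'y tattr set" where
  "shift M j = {(y, i + j) | y i. (y, i) \<in> M}"

definition closure_system :: "'y tattr set set \<Rightarrow> bool" where
  "closure_system S \<longleftrightarrow> (\<forall>F \<subseteq> S. \<Inter>F \<in> S)"

definition clo :: "'y tattr set set \<Rightarrow> 'y tattr set \<Rightarrow> 'y tattr set" where
  "clo S M = \<Inter>{N \<in> S. M \<subseteq> N}"

definition algebraic :: "'y tattr set set \<Rightarrow> bool" where
  "algebraic S \<longleftrightarrow> (\<forall>M. clo S M = \<Union>{clo S B | B. B \<subseteq> M \<and> finite B})"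

definition shift_closed :: "'y tattr set set \<Rightarrow> bool" where
  "shift_closed S \<longleftrightarrow> (\<forall>M \<in> S. \<forall>i. shift M i \<in> S)"

(* A formula A \<Rightarrow> B is a pair (A, B) of finite sets *)
type_synonym 'y formula = "'y tattr set \<times> 'y tattr set"

definition is_formula :: "'y formula \<Rightarrow> bool" where
  "is_formula f \<longleftrightarrow> finite (fst f) \<and> finite (snd f)"

definition holds :: "'y tattr set \<Rightarrow> 'y formula \<Rightarrow> bool" where
  "holds M f \<longleftrightarrow> (\<forall>i. shift (fst f) i \<subseteq> M \<longrightarrow> shift (snd f) i \<subseteq> M)"

definition Mod :: "'y formula set \<Rightarrow> 'y tattr set set" where
  "Mod \<Sigma> = {M. \<forall>f \<in> \<Sigma>. holds M f}"

end

theory Submission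
  imports Defs
begin

lemma shift_shift: "shift (shift M a) b = shift M (a + b)"
  unfolding shift_def by (auto simp: add.assoc)

lemma shift_0: "shift M 0 = M"
  unfolding shift_def by auto

lemma shift_mono: "A \<subseteq> B \<Longrightarrow> shift A i \<subseteq> shift B i"
  unfolding shift_def by auto

theorem theorem3:
  fixes S :: "('y::finite) tattr set set"
  assumes "closure_system S" and "algebraic S" and "shift_closed S"
  shows "\<exists>\<Sigma>. (\<forall>f \<in> \<Sigma>. is_formula f) \<and> S = Mod \<Sigma>"
proof (intro exI conjI)
  define \<Sigma> :: "'y formula set" where
    "\<Sigma> = {(B, C) | B C. finite B \<and> finite C \<and> C \<subseteq> clo S B}"
  show "\<forall>f \<in> \<Sigma>. is_formula f" unfolding \<Sigma>_def is_formula_def by auto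
  show "S = Mod \<Sigma>"
  proof
    show "S \<subseteq> Mod \<Sigma>"
    proof
      fix M assume M: "M \<in> S"
      show "M \<in> Mod \<Sigma>" unfolding Mod_def
      proof (clarify)
        fix f assume "f \<in> \<Sigma>"
        then obtain B C where f: "f = (B, C)" and C: "C \<subseteq> clo S B"
          unfolding \<Sigma>_def by auto
        show "holds M f" unfolding holds_def f fst_conv snd_conv
        proof (intro allI impI)
          fix i assume Bi: "shift B i \<subseteq> M"
          have N: "shift M (-i) \<in> S" using M assms(3) unfolding shift_closed_def by auto
          have "B \<subseteq> shift M (-i)"
            using shift_mono[OF Bi, of "-i"] by (simp add: shift_shift shift_0)
          hence "clo S B \<subseteq> shift M (-i)" using N unfolding clo_def by auto
          hence "C \<subseteq> shift M (-i)" using C by auto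
          thus "shift C i \<subseteq> M"
            using shift_mono[of C "shift M (-i)" i] by (simp add: shift_shift shift_0)
        qed
      qed
    qed
  next
    show "Mod \<Sigma> \<subseteq> S"
    proof
      fix M assume M: "M \<in> Mod \<Sigma>"
      have inS: "clo S M \<in> S"
        using assms(1) unfolding closure_system_def clo_def by auto
      have "clo S M \<subseteq> M"
      proof
        fix x assume "x \<in> clo S M"
        then obtain B where B: "B \<subseteq> M" "finite B" "x \<in> clo S B"
          using assms(2) unfolding algebraic_def by blast
        have "(B, {x}) \<in> \<Sigma>" unfolding \<Sigma>_def using B by auto
        hence "holds M (B, {x})" using M unfolding Mod_def by auto
        hence "shift B 0 \<subseteq> M \<longrightarrow> shift {x} 0 \<subseteq> M" unfolding holds_def by auto
        thus "x \<in> M" using B by (simp add: shift_0)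
      qed
      moreover have "M \<subseteq> clo S M" unfolding clo_def by auto
      ultimately show "M \<in> S" using inS by auto
    qed
  qed
qed

end
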